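(* Let $Q=\sum_{i\in I}E_{i,\sigma(i)}\in N_n$ be a subpermutation and let $A=[a_{ij}]\in QU_n$ be a Belitskii canonical form under $B_n$-similarity. If $a_{ij}\neq0$, then $i\in I=[n]\setminus S_h$ and one of the following holds: (1) $j=i^+$ (and then $a_{ij}=1$); (2) $j\in S_t\setminus S_h$ and $i^+<j$; (3) $j\notin S_t\cup S_h$ and $j^-<i<i^+<j$. In particular, for each $i\in I$ and each chain of $G_Q$ there is at most one vertex $j$ of that chain with $a_{ij}\neq0$.
   Context: $\mathbb F$ is a field; $[n]=\{1,\dots,n\}$. $B_n$ (resp. $U_n$, $N_n$) is the set of $n\times n$ invertible upper triangular (resp. upper triangular with diagonal entries $1$, strictly upper triangular) matrices over $\mathbb F$; $QU_n=\{QU:U\in U_n\}$; $E_{ij}$ is the matrix unit. A subpermutation is a matrix each of whose rows and columns has at most one nonzero entry, equal to $1$; here $I\subseteq[n]$ and $\sigma:I\to[n]$ is injective with $i<\sigma(i)$. $G_Q$ is the directed graph on $[n]$ with arcs $(i,\sigma(i))$, $i\in I$; its connected components are directed paths $i_1\to\cdots\to i_p$ with $i_1<\cdots<i_p$, called chains. Notation: $i^+:=\sigma(i)$ for $i\in I$, $j^-:=\sigma^{-1}(j)$ for $j\in\sigma(I)$; $S_h=[n]\setminus I$ (chain heads), $S_t=[n]\setminus\sigma(I)$ (chain tails). Belitskii order on positions $\{(i,j):1\le i<j\le n\}$: $(i,j)\prec(i',j')$ iff $i>i'$, or $i=i'$ and $j<j'$. Belitskii's algorithm for $B_n$-similarity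 on $N_n$: given $A\in N_n$ put $A^{(0)}=A$, $G^{(0)}=B_n$. For $k=0,1,\dots$, let $(p,q)$ be the $(k+1)$th position in Belitskii order and look at the $(p,q)$ entries of all matrices $G^{(k)}$-similar to $A^{(k)}$: (a) if this entry is always $0$ or can take every value of $\mathbb F$, choose $A^{(k+1)}$ $G^{(k)}$-similar to $A^{(k)}$ with that entry $0$; (b) if it takes exactly the values of $\mathbb F\setminus\{0\}$, choose $A^{(k+1)}$ with that entry $1$; (c) otherwise it is a constant $\lambda\ne0$ and $A^{(k+1)}=A^{(k)}$. $G^{(k+1)}$ is the subgroup of $g\in G^{(k)}$ such that $gA^{(k+1)}g^{-1}$ agrees with $A^{(k+1)}$ in the first $k+1$ positions. The final matrix is the Belitskii canonical form of $A$; a matrix is a Belitskii canonical form if it is the Belitskii canonical form of some matrix. *)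

theory Defs
  imports Main
begin

text \<open>n x n matrices over a field are represented as functions nat => nat => 'a,
  indexed by 1..n, with all entries outside [n] x [n] equal to zero.\<close>

type_synonym 'a mat = "nat \<Rightarrow> nat \<Rightarrow> 'a"

definition is_mat :: "nat \<Rightarrow> 'a::zero mat \<Rightarrow> bool" where
  "is_mat n M \<longleftrightarrow> (\<forall>i j. (i \<notin> {1..n} \<or> j \<notin> {1..n}) \<longrightarrow> M i j = 0)"

definition mmul :: "nat \<Rightarrow> 'a::field mat \<Rightarrow> 'a mat \<Rightarrow> 'a mat" where
  "mmul n A B = (\<lambda>i j. \<Sum>k\<in>{1..n}. A i k * B k j)"

definition idm :: "nat \<Rightarrow> 'a::field mat" where
  "idm n = (\<lambda>i j. if i = j \<and> i \<in> {1..n} then 1 else 0)"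

definition minv :: "nat \<Rightarrow> 'a::field mat \<Rightarrow> 'a mat" where
  "minv n g = (SOME h. is_mat n h \<and> mmul n g h = idm n \<and> mmul n h g = idm n)"

definition conj :: "nat \<Rightarrow> 'a::field mat \<Rightarrow> 'a mat \<Rightarrow> 'a mat" where
  "conj n g A = mmul n (mmul n g A) (minv n g)"

definition Bn :: "nat \<Rightarrow> 'a::field mat set" where
  "Bn n = {g. is_mat n g \<and> (\<forall>i j. j < i \<longrightarrow> g i j = 0) \<and> (\<forall>i\<in>{1..n}. g i i \<noteq> 0)}"

definition Un_n :: "nat \<Rightarrow> 'a::field mat set" where
  "Un_n n = {g. is_mat n g \<and> (\<forall>i j. j < i \<longrightarrow> g i j = 0) \<and> (\<forall>i\<in>{1..n}. g i i = 1)}"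

definition Nn :: "nat \<Rightarrow> 'a::field mat set" where
  "Nn n = {M. is_mat n M \<and> (\<forall>i j. j \<le> i \<longrightarrow> M i j = 0)}"

definition QUn :: "nat \<Rightarrow> 'a::field mat \<Rightarrow> 'a mat set" where
  "QUn n Q = {mmul n Q U | U. U \<in> Un_n n}"

definition subperm :: "nat set \<Rightarrow> (nat \<Rightarrow> nat) \<Rightarrow> 'a::field mat" where
  "subperm I \<sigma> = (\<lambda>i j. if i \<in> I \<and> j = \<sigma> i then 1 else 0)"

definition bel_less :: "nat \<times> nat \<Rightarrow> nat \<times> nat \<Rightarrow> bool" where
  "bel_less p p' \<longleftrightarrow> fst p > fst p' \<or> (fst p = fst p' \<and> snd p < snd p')"

definition bel_positions :: "nat \<Rightarrow> (nat \<times> nat) list" where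
  "bel_positions n = concat (map (\<lambda>i. map (\<lambda>j. (i, j)) [Suc i..<Suc n]) (rev [1..<n]))"

definition orbit :: "nat \<Rightarrow> 'a::field mat set \<Rightarrow> 'a mat \<Rightarrow> 'a mat set" where
  "orbit n G A = {conj n g A | g. g \<in> G}"

definition bel_step :: "nat \<Rightarrow> nat \<times> nat \<Rightarrow> 'a::field mat set \<Rightarrow> 'a mat \<Rightarrow> 'a mat \<Rightarrow> bool" where
  "bel_step n pq G A A' \<longleftrightarrow>
     (let V = {M (fst pq) (snd pq) | M. M \<in> orbit n G A} in
      if V = {0} \<or> V = UNIV then A' \<in> orbit n G A \<and> A' (fst pq) (snd pq) = 0
      else if V = UNIV - {0} then A' \<in> orbit n G A \<and> A' (fst pq) (snd pq) = 1
      else A' = A)"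

definition bel_stab :: "nat \<Rightarrow> nat \<Rightarrow> 'a::field mat set \<Rightarrow> 'a mat \<Rightarrow> 'a mat set" where
  "bel_stab n k G A' = {g \<in> G. \<forall>m \<le> k.
      conj n g A' (fst (bel_positions n ! m)) (snd (bel_positions n ! m))
        = A' (fst (bel_positions n ! m)) (snd (bel_positions n ! m))}"

definition bel_run :: "nat \<Rightarrow> 'a::field mat \<Rightarrow> (nat \<Rightarrow> 'a mat) \<Rightarrow> (nat \<Rightarrow> 'a mat set) \<Rightarrow> bool" where
  "bel_run n A As Gs \<longleftrightarrow>
     As 0 = A \<and> Gs 0 = Bn n \<and>
     (\<forall>k < length (bel_positions n).
        bel_step n (bel_positions n ! k) (Gs k) (As k) (As (Suc k)) \<and>
        Gs (Suc k) = bel_stab n k (Gs k) (As (Suc k)))"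

definition bel_cf_of :: "nat \<Rightarrow> 'a::field mat \<Rightarrow> 'a mat \<Rightarrow> bool" where
  "bel_cf_of n A C \<longleftrightarrow> A \<in> Nn n \<and>
     (\<exists>As Gs. bel_run n A As Gs \<and> As (length (bel_positions n)) = C)"

definition is_bel_cf :: "nat \<Rightarrow> 'a::field mat \<Rightarrow> bool" where
  "is_bel_cf n C \<longleftrightarrow> (\<exists>A. bel_cf_of n A C)"

text \<open>Chains of G_Q: connected components of the graph with arcs (i, sigma i), i in I.\<close>
definition same_chain :: "nat set \<Rightarrow> (nat \<Rightarrow> nat) \<Rightarrow> nat \<Rightarrow> nat \<Rightarrow> bool" where
  "same_chain I \<sigma> j j' \<longleftrightarrow>
     (j, j') \<in> ({(i, \<sigma> i) | i. i \<in> I} \<union> {(\<sigma> i, i) | i. i \<in> I})\<^sup>*"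

end

theory Submission
  imports Defs "HOL-Library.Function_Algebras"
begin



function rinv :: "nat \<Rightarrow> 'a::field mat \<Rightarrow> nat \<Rightarrow> nat \<Rightarrow> 'a" where
  "rinv n g p q = (if p \<in> {1..n} \<and> q \<in> {1..n} \<and> p \<le> q then
     (if p = q then inverse (g p p) else - (\<Sum>k\<in>{Suc p..q}. g p k * rinv n g k q) / g p p) else 0)"
  by auto
termination by (relation "measure (\<lambda>(n,g,p,q). q - p)") auto

declare rinv.simps[simp del]

lemma mmul_assoc: "mmul n (mmul n A B) C = mmul n A (mmul n B C)"
  unfolding mmul_def
  by (auto simp: sum_distrib_left sum_distrib_right mult.assoc intro!: ext sum.swap[THEN trans])

lemma mmul_idm_left: "is_mat n B \<Longrightarrow> mmul n (idm n) B = B"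
proof (rule ext, rule ext)
  fix i j assume "is_mat n B"
  have "(\<Sum>k\<in>{1..n}. (if i = k \<and> i \<in> {1..n} then 1 else 0) * B k j) = (if i \<in> {1..n} then B i j else 0)"
  proof (cases "i \<in> {1..n}")
    case True then show ?thesis by (simp add: if_distrib[of "\<lambda>x. x * _"] sum.delta cong: if_cong)
  next
    case False then show ?thesis by (intro trans[OF sum.neutral]) auto
  qed
  then show "mmul n (idm n) B i j = B i j" using \<open>is_mat n B\<close> unfolding mmul_def idm_def is_mat_def by auto
qed

lemma mmul_idm_right: "is_mat n B \<Longrightarrow> mmul n B (idm n) = B"
proof (rule ext, rule ext)
  fix i j assume "is_mat n B"
  have "(\<Sum>k\<in>{1..n}. B i k * (if k = j \<and> k \<in> {1..n} then 1 else 0)) = (if j \<in> {1..n} then B i j else 0)"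
  proof (cases "j \<in> {1..n}")
    case True then show ?thesis by (simp add: if_distrib[of "\<lambda>x. _ * x"] sum.delta' cong: if_cong)
  next
    case False then show ?thesis by (intro trans[OF sum.neutral]) auto
  qed
  then show "mmul n B (idm n) i j = B i j" using \<open>is_mat n B\<close> unfolding mmul_def idm_def is_mat_def by auto
qed

lemma rinv_is_mat: "is_mat n (rinv n g)"
  unfolding is_mat_def by (subst rinv.simps) auto

lemma rinv_upper: "q < p \<Longrightarrow> rinv n g p q = 0"
  by (subst rinv.simps) auto

lemma rinv_diag: "p \<in> {1..n} \<Longrightarrow> rinv n g p p = inverse (g p p)"
  by (subst rinv.simps) auto

lemma rinv_right:
  assumes "g \<in> Bn n"
  shows "mmul n g (rinv n g) = idm n"
proof (rule ext, rule ext)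
  fix p q
  have gm: "is_mat n g" and gu: "\<And>i j. j < i \<Longrightarrow> g i j = 0" and gd: "\<And>i. i \<in> {1..n} \<Longrightarrow> g i i \<noteq> 0"
    using assms unfolding Bn_def by auto
  show "mmul n g (rinv n g) p q = idm n p q"
  proof (cases "p \<in> {1..n} \<and> q \<in> {1..n} \<and> p \<le> q")
    case False
    then show ?thesis
    proof (cases "p \<in> {1..n} \<and> q \<in> {1..n}")
      case True
      with False have "q < p" by auto
      have "\<forall>k\<in>{1..n}. g p k * rinv n g k q = 0"
        using gu rinv_upper \<open>q < p\<close> by (metis linorder_not_less mult_eq_0_iff order_less_le_trans)
      then have "(\<Sum>k\<in>{1..n}. g p k * rinv n g k q) = 0" by (intro sum.neutral) simp
      then show ?thesis using \<open>q<p\<close> unfolding mmul_def idm_def by simp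
    next
      case False
      have rm: "is_mat n (rinv n g)" by (rule rinv_is_mat)
      from False have "\<forall>k\<in>{1..n}. g p k * rinv n g k q = 0"
        using gm rm unfolding is_mat_def by (metis mult_eq_0_iff)
      then have "(\<Sum>k\<in>{1..n}. g p k * rinv n g k q) = 0" by (intro sum.neutral) simp
      then show ?thesis using False unfolding mmul_def idm_def by auto
    qed
  next
    case True
    have "(\<Sum>k\<in>{1..n}. g p k * rinv n g k q) = (\<Sum>k\<in>{p..q}. g p k * rinv n g k q)"
      using True gu rinv_upper
    proof (intro sum.mono_neutral_right)
      show "\<forall>k\<in>{1..n} - {p..q}. g p k * rinv n g k q = 0"
      proof
        fix k assume "k \<in> {1..n} - {p..q}"
        then have "k < p \<or> q < k" by auto
        then show "g p k * rinv n g k q = 0" using gu[of k p] rinv_upper[of q k n g] by auto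
      qed
    qed (use True in auto)
    also have "\<dots> = g p p * rinv n g p q + (\<Sum>k\<in>{Suc p..q}. g p k * rinv n g k q)"
      using True by (simp add: sum.atLeast_Suc_atMost)
    also have "\<dots> = idm n p q"
    proof (cases "p = q")
      case True
      then show ?thesis using \<open>p \<in> {1..n} \<and> q \<in> {1..n} \<and> p \<le> q\<close> gd
        by (simp add: rinv_diag idm_def)
    next
      case False
      then have "rinv n g p q = - (\<Sum>k\<in>{Suc p..q}. g p k * rinv n g k q) / g p p"
        using True by (subst rinv.simps) auto
      then show ?thesis using False True gd[of p] by (simp add: idm_def)
    qed
    finally show ?thesis unfolding mmul_def .
  qed
qed

lemma rinv_Bn: "g \<in> Bn n \<Longrightarrow> rinv n g \<in> Bn n"
  by (simp add: Bn_def rinv_is_mat rinv_upper rinv_diag)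

lemma rinv_left:
  assumes "g \<in> Bn n"
  shows "mmul n (rinv n g) g = idm n"
proof -
  let ?R = "rinv n g" let ?R' = "rinv n ?R"
  have gm: "is_mat n g" using assms unfolding Bn_def by auto
  have "?R' = mmul n (idm n) ?R'" using mmul_idm_left rinv_is_mat by metis
  also have "\<dots> = mmul n g (mmul n ?R ?R')" using rinv_right[OF assms] mmul_assoc by metis
  also have "\<dots> = g" using rinv_right[OF rinv_Bn[OF assms]] mmul_idm_right[OF gm] by simp
  finally have "?R' = g" .
  then show ?thesis using rinv_right[OF rinv_Bn[OF assms]] by simp
qed

lemma inv_unique:
  assumes "g \<in> Bn n" "is_mat n h" "mmul n g h = idm n"
  shows "h = rinv n g"
proof -
  have "h = mmul n (idm n) h" using mmul_idm_left assms(2) by metis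
  also have "\<dots> = mmul n (rinv n g) (mmul n g h)" using rinv_left[OF assms(1)] mmul_assoc by metis
  also have "\<dots> = rinv n g" using assms(3) mmul_idm_right rinv_is_mat by metis
  finally show ?thesis .
qed

lemma minv_Bn:
  assumes "g \<in> Bn n"
  shows "minv n g = rinv n g"
proof -
  have ex: "\<exists>h. is_mat n h \<and> mmul n g h = idm n \<and> mmul n h g = idm n"
    using rinv_is_mat rinv_right[OF assms] rinv_left[OF assms] by blast
  have "is_mat n (minv n g) \<and> mmul n g (minv n g) = idm n \<and> mmul n (minv n g) g = idm n"
    unfolding minv_def by (rule someI_ex[OF ex])
  then show ?thesis using inv_unique[OF assms] by blast
qed




lemma mmul_add_left: "mmul n (A + B) C = mmul n A C + mmul n B C"
  by (auto simp: mmul_def distrib_right sum.distrib intro!: ext)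
lemma mmul_add_right: "mmul n A (B + C) = mmul n A B + mmul n A C"
  by (auto simp: mmul_def distrib_left sum.distrib intro!: ext)
lemma mmul_diff_right: "mmul n A (B - C) = mmul n A B - mmul n A C"
  by (auto simp: mmul_def right_diff_distrib sum_subtractf intro!: ext)
lemma mmul_diff_left: "mmul n (A - B) C = mmul n A C - mmul n B C"
  by (auto simp: mmul_def left_diff_distrib sum_subtractf intro!: ext)

lemma mmul_zero_entry: "(\<And>k. k \<in> {1..n} \<Longrightarrow> A p k = 0 \<or> B k q = 0) \<Longrightarrow> mmul n A B p q = 0"
  unfolding mmul_def by (intro sum.neutral) auto

lemma is_mat_mmul: "is_mat n A \<Longrightarrow> is_mat n B \<Longrightarrow> is_mat n (mmul n A B)"
  unfolding is_mat_def by (auto intro!: mmul_zero_entry)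

lemma conj_Nn:
  assumes g: "g \<in> Bn n" and M: "M \<in> Nn n"
  shows "conj n g M \<in> Nn n"
proof -
  have gm: "is_mat n g" and gu: "\<And>i j. j < i \<Longrightarrow> g i j = 0"
    using g unfolding Bn_def by auto
  have Mm: "is_mat n M" and Mu: "\<And>i j. j \<le> i \<Longrightarrow> M i j = 0" using M unfolding Nn_def by auto
  have R: "minv n g = rinv n g" by (rule minv_Bn[OF g])
  have GM: "mmul n g M p k = 0" if "k \<le> p" for p k
  proof (rule mmul_zero_entry)
    fix l
    show "g p l = 0 \<or> M l k = 0"
      using gu[of l p] Mu[of k l] \<open>k \<le> p\<close> by (cases "l < p") auto
  qed
  have "is_mat n (conj n g M)" unfolding conj_def R
    by (intro is_mat_mmul gm Mm rinv_is_mat)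
  moreover have "conj n g M p q = 0" if "q \<le> p" for p q
    unfolding conj_def R
  proof (rule mmul_zero_entry)
    fix k
    show "mmul n g M p k = 0 \<or> rinv n g k q = 0"
      using GM[of k p] rinv_upper[of q k n g] \<open>q \<le> p\<close> by (cases "k \<le> p") auto
  qed
  ultimately show ?thesis unfolding Nn_def by auto
qed

definition colX :: "nat \<Rightarrow> (nat \<Rightarrow> 'a::field) \<Rightarrow> 'a mat" where
  "colX c y = (\<lambda>p q. if q = c then y p else 0)"

lemma colX_mmul_left:
  assumes "c \<in> {1..n}"
  shows "mmul n (colX c y) M p q = y p * M c q"
proof -
  have "mmul n (colX c y) M p q = (\<Sum>k\<in>{1..n}. if k = c then y p * M k q else 0)"
    unfolding mmul_def colX_def by (intro sum.cong) auto
  then show ?thesis using assms by (simp add: sum.delta')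
qed

lemma colX_mmul_right:
  "mmul n M (colX c y) p q = (if q = c then (\<Sum>a\<in>{1..n}. M p a * y a) else 0)"
  unfolding mmul_def colX_def by auto

lemma col_conj:
  assumes c: "c \<in> {1..n}" and y: "\<And>p. y p \<noteq> 0 \<Longrightarrow> 1 \<le> p \<and> p < c" and M: "M \<in> Nn n"
  shows "idm n + colX c y \<in> Bn n"
    and "conj n (idm n + colX c y) M p q = M p q + y p * M c q
           - (if q = c then (\<Sum>a\<in>{1..n}. M p a * y a) else 0)"
proof -
  let ?X = "colX c y"
  have Xm: "is_mat n ?X" unfolding is_mat_def colX_def using c y by force
  have im: "is_mat n (idm n :: 'a mat)" unfolding is_mat_def idm_def by auto
  have yz: "y p = 0" if "c \<le> p" for p using y[of p] that by linarith
  show gB: "idm n + ?X \<in> Bn n"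
    unfolding Bn_def using Xm im c
    by (auto simp: is_mat_def colX_def idm_def yz)
  have XX: "mmul n ?X ?X = 0"
  proof (rule ext, rule ext)
    fix p q show "mmul n ?X ?X p q = 0 p q"
      unfolding colX_mmul_left[OF c] by (simp add: colX_def yz)
  qed
  have inv: "mmul n (idm n + ?X) (idm n - ?X) = idm n"
    by (simp add: mmul_add_left mmul_diff_right mmul_idm_left mmul_idm_right im Xm XX)
  have mi: "is_mat n (idm n - ?X)" using Xm im unfolding is_mat_def by auto
  have R: "minv n (idm n + ?X) = idm n - ?X"
    using minv_Bn[OF gB] inv_unique[OF gB mi inv] by simp
  have Mm: "is_mat n M" and Mu: "\<And>i j. j \<le> i \<Longrightarrow> M i j = 0" using M unfolding Nn_def by auto
  have "conj n (idm n + ?X) M = M + mmul n ?X M - (mmul n M ?X + mmul n (mmul n ?X M) ?X)"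
    unfolding conj_def R
    by (simp add: is_mat_mmul[OF Xm Mm] mmul_add_left mmul_diff_right mmul_idm_left mmul_idm_right Mm mmul_add_right algebra_simps)
  moreover have "mmul n (mmul n ?X M) ?X p q = 0"
  proof -
    have "mmul n (mmul n ?X M) ?X p q = (if q = c then (\<Sum>a\<in>{1..n}. y p * M c a * y a) else 0)"
      by (simp add: colX_mmul_right colX_mmul_left[OF c])
    also have "\<dots> = 0"
    proof -
      have "(\<Sum>a\<in>{1..n}. y p * M c a * y a) = 0"
      proof (intro sum.neutral ballI)
        fix a show "y p * M c a * y a = 0" using y[of a] Mu[of a c] by (cases "y a = 0") auto
      qed
      then show ?thesis by simp
    qed
    finally show ?thesis .
  qed
  ultimately show "conj n (idm n + ?X) M p q = M p q + y p * M c q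
           - (if q = c then (\<Sum>a\<in>{1..n}. M p a * y a) else 0)"
    by (simp add: colX_mmul_right colX_mmul_left[OF c])
qed




lemma set_bel_positions: "set (bel_positions n) = {(p,q). 1 \<le> p \<and> p < q \<and> q \<le> n}"
  unfolding bel_positions_def by (auto simp del: upt_Suc simp: image_iff)

lemma sorted_concat_map:
  assumes "sorted_wrt Q xs" "\<And>x. x \<in> set xs \<Longrightarrow> sorted_wrt R (f x)"
    "\<And>x y a b. Q x y \<Longrightarrow> a \<in> set (f x) \<Longrightarrow> b \<in> set (f y) \<Longrightarrow> R a b"
  shows "sorted_wrt R (concat (map f xs))"
  using assms by (induction xs) (auto simp: sorted_wrt_append)

lemma sorted_bel: "sorted_wrt bel_less (bel_positions n)"
  unfolding bel_positions_def
proof (rule sorted_concat_map[where Q = "(>)"])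
  show "sorted_wrt (>) (rev [1..<n])" by (simp add: sorted_wrt_rev)
  fix x show "sorted_wrt bel_less (map (\<lambda>j. (x, j)) [Suc x..<Suc n])"
    unfolding sorted_wrt_map bel_less_def
    by (rule sorted_wrt_mono_rel[OF _ sorted_wrt_upt]) simp
next
  fix x y a b assume "x > y" "a \<in> set (map (Pair x) [Suc x..<Suc n])" "b \<in> set (map (Pair y) [Suc y..<Suc n])"
  then show "bel_less a b" by (auto simp: bel_less_def)
qed

lemma bel_idx_less:
  assumes "m < length (bel_positions n)" "k < length (bel_positions n)"
    "bel_less (bel_positions n ! m) (bel_positions n ! k)"
  shows "m < k"
proof (rule ccontr)
  assume "\<not> m < k"
  then have "k < m \<or> k = m" by auto
  then show False
  proof
    assume "k < m"
    then have "bel_less (bel_positions n ! k) (bel_positions n ! m)"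
      using sorted_wrt_nth_less[OF sorted_bel] assms by blast
    then show False using assms(3) by (auto simp: bel_less_def)
  next
    assume "k = m" then show False using assms(3) by (auto simp: bel_less_def)
  qed
qed

lemma bel_idx_exists:
  assumes "1 \<le> p" "p < q" "q \<le> n"
  shows "\<exists>k < length (bel_positions n). bel_positions n ! k = (p,q)"
proof -
  have "(p,q) \<in> set (bel_positions n)" using assms set_bel_positions by auto
  then show ?thesis by (metis in_set_conv_nth)
qed

lemma bel_idx_valid:
  assumes "k < length (bel_positions n)"
  shows "1 \<le> fst (bel_positions n ! k) \<and> fst (bel_positions n ! k) < snd (bel_positions n ! k)
     \<and> snd (bel_positions n ! k) \<le> n"
proof -
  have "bel_positions n ! k \<in> set (bel_positions n)" using assms by simp
  then show ?thesis unfolding set_bel_positions by auto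
qed




definition agree_before :: "nat \<Rightarrow> 'a::field mat \<Rightarrow> 'a mat \<Rightarrow> nat \<Rightarrow> nat \<Rightarrow> bool" where
  "agree_before n A M p q \<longleftrightarrow> (\<forall>p' q'. 1 \<le> p' \<and> p' < q' \<and> q' \<le> n \<and> bel_less (p',q') (p,q) \<longrightarrow> M p' q' = A p' q')"

locale brun =
  fixes n :: nat and A0 :: "'a::field mat" and As Gs
  assumes run: "bel_run n A0 As Gs" and A0: "A0 \<in> Nn n"
begin

abbreviation "P \<equiv> bel_positions n"
abbreviation "N \<equiv> length (bel_positions n)"
abbreviation ent :: "'a mat \<Rightarrow> nat \<times> nat \<Rightarrow> 'a" where "ent M pq \<equiv> M (fst pq) (snd pq)"

lemma step: "k < N \<Longrightarrow> bel_step n (P!k) (Gs k) (As k) (As (Suc k))"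
  and stab: "k < N \<Longrightarrow> Gs (Suc k) = bel_stab n k (Gs k) (As (Suc k))"
  using run unfolding bel_run_def by auto

lemma G_sub: "k \<le> N \<Longrightarrow> Gs k \<subseteq> Bn n"
proof (induction k)
  case 0 then show ?case using run unfolding bel_run_def by auto
next
  case (Suc k)
  then show ?case using stab[of k] unfolding bel_stab_def by auto
qed

lemma As_next: "k < N \<Longrightarrow> As (Suc k) = As k \<or> (\<exists>g\<in>Gs k. As (Suc k) = conj n g (As k))"
  using step[of k] unfolding bel_step_def Let_def orbit_def
  by (auto split: if_splits)

lemma As_Nn: "k \<le> N \<Longrightarrow> As k \<in> Nn n"
proof (induction k)
  case 0 then show ?case using run A0 unfolding bel_run_def by auto
next
  case (Suc k)
  then have "k < N" by auto
  then show ?case using As_next[of k] Suc conj_Nn G_sub[of k] by (metis Suc_leD in_mono)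
qed

lemma Gs_stab:
  assumes "Suc k \<le> N" "g \<in> Gs (Suc k)" "m \<le> k"
  shows "ent (conj n g (As (Suc k))) (P!m) = ent (As (Suc k)) (P!m)"
  using assms stab[of k] unfolding bel_stab_def by auto

lemma agree: "m < k \<Longrightarrow> k \<le> N \<Longrightarrow> ent (As k) (P!m) = ent (As (Suc m)) (P!m)"
proof (induction k)
  case 0 then show ?case by simp
next
  case (Suc k)
  show ?case
  proof (cases "m < k")
    case False then have "k = m" using Suc by auto
    then show ?thesis by simp
  next
    case True
    then have IH: "ent (As k) (P!m) = ent (As (Suc m)) (P!m)" using Suc by auto
    have kN: "k < N" using Suc by auto
    from As_next[OF kN] show ?thesis
    proof
      assume "As (Suc k) = As k" then show ?thesis using IH by simp
    next
      assume "\<exists>g\<in>Gs k. As (Suc k) = conj n g (As k)"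
      then obtain g where g: "g \<in> Gs k" "As (Suc k) = conj n g (As k)" by auto
      obtain k' where k': "k = Suc k'" using True by (cases k) auto
      have "ent (conj n g (As k)) (P!m) = ent (As k) (P!m)"
        using Gs_stab[of k' g m] g k' True kN by auto
      then show ?thesis using g IH by simp
    qed
  qed
qed

lemma Gs_mem:
  assumes "k \<le> N" "g \<in> Bn n"
    "\<And>m' m. m' < k \<Longrightarrow> m \<le> m' \<Longrightarrow> ent (conj n g (As (Suc m'))) (P!m) = ent (As (Suc m')) (P!m)"
  shows "g \<in> Gs k"
  using assms
proof (induction k)
  case 0 then show ?case using run unfolding bel_run_def by auto
next
  case (Suc k)
  then have "g \<in> Gs k" by auto
  then show ?case using stab[of k] Suc.prems unfolding bel_stab_def by auto
qed

abbreviation "Af \<equiv> As N"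

lemma agree_final: "m < k \<Longrightarrow> k \<le> N \<Longrightarrow> ent (As k) (P!m) = ent Af (P!m)"
  using agree[of m k] agree[of m N] by auto

lemma agree_before_As:
  assumes "k \<le> N" "m < N" "bel_positions n ! m = (p,q)" "m < k"
  shows "agree_before n Af (As k) p q"
  unfolding agree_before_def
proof (intro allI impI)
  fix p' q' assume h: "1 \<le> p' \<and> p' < q' \<and> q' \<le> n \<and> bel_less (p', q') (p, q)"
  then obtain m'' where m'': "m'' < N" "P ! m'' = (p',q')" using bel_idx_exists by blast
  then have "m'' < m" using bel_idx_less[of m'' n m] assms h by auto
  then show "As k p' q' = Af p' q'" using agree_final[of m'' k] m'' assms by auto
qed

lemma agree_before_As0:
  assumes "k \<le> N" "k < N" "bel_positions n ! k = (p,q)"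
  shows "agree_before n Af (As k) p q"
  unfolding agree_before_def
proof (intro allI impI)
  fix p' q' assume h: "1 \<le> p' \<and> p' < q' \<and> q' \<le> n \<and> bel_less (p', q') (p, q)"
  then obtain m'' where m'': "m'' < N" "P ! m'' = (p',q')" using bel_idx_exists by blast
  then have "m'' < k" using bel_idx_less[of m'' n k] assms h by auto
  then show "As k p' q' = Af p' q'" using agree_final[of m'' k] m'' assms by auto
qed

lemma kill:
  fixes gg :: "'a \<Rightarrow> 'a mat" and i j :: nat
  assumes ij: "1 \<le> i" "i < j" "j \<le> n"
    and gB: "\<And>s. gg s \<in> Bn n"
    and ga: "\<And>s M p q. M \<in> Nn n \<Longrightarrow> 1 \<le> p \<Longrightarrow> p < q \<Longrightarrow> q \<le> n \<Longrightarrow> bel_less (p,q) (i,j)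
               \<Longrightarrow> agree_before n Af M p q \<Longrightarrow> conj n (gg s) M p q = M p q"
    and gb: "\<And>s M. M \<in> Nn n \<Longrightarrow> agree_before n Af M i j \<Longrightarrow> conj n (gg s) M i j = M i j + s"
  shows "Af i j = 0"
proof -
  obtain k where k: "k < N" "P ! k = (i,j)" using bel_idx_exists ij by blast
  have mem: "gg s \<in> Gs k" for s
  proof (rule Gs_mem)
    show "k \<le> N" using k by simp
    show "gg s \<in> Bn n" by (rule gB)
    fix m' m assume mm: "m' < k" "m \<le> m'"
    obtain p q where pq: "P ! m = (p,q)" by (cases "P ! m") auto
    have mN: "m < N" using mm k by auto
    have v: "1 \<le> p" "p < q" "q \<le> n" using bel_idx_valid[OF mN] pq by auto
    have bl: "bel_less (p,q) (i,j)" using sorted_wrt_nth_less[OF sorted_bel, of m k n] mm k pq by auto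
    have MN: "As (Suc m') \<in> Nn n" using As_Nn mm k by auto
    have ab: "agree_before n Af (As (Suc m')) p q"
      using agree_before_As[of "Suc m'" m p q] mm k mN pq by auto
    show "ent (conj n (gg s) (As (Suc m'))) (P!m) = ent (As (Suc m')) (P!m)"
      using ga[OF MN v bl ab] pq by simp
  qed
  have MK: "As k \<in> Nn n" using As_Nn k by auto
  have abk: "agree_before n Af (As k) i j" using agree_before_As0[of k i j] k by auto
  let ?V = "{M (fst (P!k)) (snd (P!k)) | M. M \<in> orbit n (Gs k) (As k)}"
  have "?V = UNIV"
  proof -
    have "t \<in> ?V" for t
    proof -
      have "conj n (gg (t - As k i j)) (As k) \<in> orbit n (Gs k) (As k)"
        unfolding orbit_def using mem by blast
      moreover have "conj n (gg (t - As k i j)) (As k) i j = t" using gb[OF MK abk] by simp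
      ultimately show ?thesis using k(2) by (intro CollectI exI[of _ "conj n (gg (t - As k i j)) (As k)"]) simp
    qed
    then show ?thesis by auto
  qed
  then have "As (Suc k) i j = 0" using step[OF k(1)] k unfolding bel_step_def Let_def by auto
  then show ?thesis using agree_final[of k "Suc k"] k by auto
qed

end



inductive cpath :: "nat set \<Rightarrow> (nat \<Rightarrow> nat) \<Rightarrow> nat \<Rightarrow> nat \<Rightarrow> bool" for I \<sigma> where
  crefl: "cpath I \<sigma> j j"
| cstep: "cpath I \<sigma> j w \<Longrightarrow> w \<in> I \<Longrightarrow> cpath I \<sigma> j (\<sigma> w)"

lemma cpath_prepend: "cpath I \<sigma> w j \<Longrightarrow> w' \<in> I \<Longrightarrow> \<sigma> w' = w \<Longrightarrow> cpath I \<sigma> w' j"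
  by (induction rule: cpath.induct) (auto intro: cpath.intros)

lemma cpath_front: "cpath I \<sigma> j' j \<Longrightarrow> j \<noteq> j' \<Longrightarrow> j' \<in> I \<and> cpath I \<sigma> (\<sigma> j') j"
proof (induction rule: cpath.induct)
  case (crefl j) then show ?case by simp
next
  case (cstep w) then show ?case by (cases "w = j'") (auto intro: cpath.intros)
qed

lemma cpath_last: "cpath I \<sigma> j j' \<Longrightarrow> j \<noteq> j' \<Longrightarrow> \<exists>w. cpath I \<sigma> j w \<and> w \<in> I \<and> \<sigma> w = j'"
  by (induction rule: cpath.induct) auto

lemma cpath_mono: "cpath I \<sigma> j j' \<Longrightarrow> \<forall>i\<in>I. i < \<sigma> i \<Longrightarrow> j \<le> j'"
  by (induction rule: cpath.induct) force+

lemma same_chain_cpath: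
  assumes "same_chain I \<sigma> j j'" "inj_on \<sigma> I"
  shows "cpath I \<sigma> j j' \<or> cpath I \<sigma> j' j"
  using assms(1) unfolding same_chain_def
proof (induction rule: rtrancl_induct)
  case base then show ?case by (auto intro: cpath.intros)
next
  case (step y z)
  from step.hyps(2) consider (f) "y \<in> I" "z = \<sigma> y" | (b) "z \<in> I" "y = \<sigma> z" by auto
  then show ?case
  proof cases
    case f
    from step.IH show ?thesis
    proof
      assume "cpath I \<sigma> j y" then show ?thesis using f by (auto intro: cpath.intros)
    next
      assume h: "cpath I \<sigma> y j"
      show ?thesis
      proof (cases "j = y")
        case True then show ?thesis using f by (auto intro: cpath.intros)
      next
        case False then show ?thesis using cpath_front[OF h] f by auto
      qed
    qed
  next
    case b
    from step.IH show ?thesis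
    proof
      assume h: "cpath I \<sigma> j y"
      show ?thesis
      proof (cases "j = y")
        case True then show ?thesis using b by (metis cpath.intros)
      next
        case False
        then obtain w where w: "cpath I \<sigma> j w" "w \<in> I" "\<sigma> w = y" using cpath_last[OF h] by auto
        then have "w = z" using b assms(2) by (auto dest: inj_onD)
        then show ?thesis using w by auto
      qed
    next
      assume "cpath I \<sigma> y j" then show ?thesis using b cpath_prepend by metis
    qed
  qed
qed

lemma chain_unique:
  assumes inj: "inj_on \<sigma> I" and up: "\<forall>i\<in>I. i < \<sigma> i" and iI: "i \<in> I"
    and cp: "cpath I \<sigma> j j'" and lt: "j < j'"
    and H: "\<And>x. x \<in> {j, j'} \<Longrightarrow> x = \<sigma> i \<or> (x \<notin> \<sigma> ` I \<and> \<sigma> i < x) \<or> (x \<in> \<sigma> ` I \<and> the_inv_into I \<sigma> x < i \<and> \<sigma> i < x)"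
  shows False
proof -
  obtain w where w: "cpath I \<sigma> j w" "w \<in> I" "\<sigma> w = j'" using cpath_last[OF cp] lt by auto
  have jw: "j \<le> w" using cpath_mono[OF w(1) up] .
  have tw: "the_inv_into I \<sigma> j' = w" using w inj by (metis the_inv_into_f_f)
  have "i < \<sigma> i" using up iI by auto
  from H[of j'] consider "j' = \<sigma> i" | "j' \<notin> \<sigma> ` I" | "the_inv_into I \<sigma> j' < i \<and> \<sigma> i < j'" by auto
  then show False
  proof cases
    case 1
    then have "w = i" using w iI inj by (auto dest: inj_onD)
    then show False using H[of j] 1 jw lt \<open>i < \<sigma> i\<close> by auto
  next
    case 2 then show False using w by auto
  next
    case 3
    then show False using H[of j] jw tw \<open>i < \<sigma> i\<close> by auto
  qed
qed




context brun begin

lemma part1: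
  assumes IS: "I \<subseteq> {1..n}" and inj: "inj_on \<sigma> I" and up: "\<forall>i\<in>I. i < \<sigma> i \<and> \<sigma> i \<le> n"
    and U: "U \<in> Un_n n" and AQ: "Af = mmul n (subperm I \<sigma>) U"
    and ij: "i \<in> {1..n}" "j \<in> {1..n}" and nz: "Af i j \<noteq> 0"
  shows "i \<in> I \<and> \<sigma> i \<le> j \<and> (j = \<sigma> i \<longrightarrow> Af i j = 1)
     \<and> (\<sigma> i < j \<longrightarrow> j \<in> I \<and> (j \<in> \<sigma> ` I \<longrightarrow> the_inv_into I \<sigma> j < i))"
proof -
  have Um: "is_mat n U" and Uu: "\<And>a b. b < a \<Longrightarrow> U a b = 0" and Ud: "\<And>a. a \<in> {1..n} \<Longrightarrow> U a a = 1"
    using U unfolding Un_n_def by auto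
  have UB: "U \<in> Bn n" using U unfolding Un_n_def Bn_def by auto
  have Aent: "Af p q = (if p \<in> I then U (\<sigma> p) q else 0)" for p q
  proof -
    have "Af p q = (\<Sum>k\<in>{1..n}. if k = (if p \<in> I then \<sigma> p else 0) \<and> p \<in> I then U k q else 0)"
      unfolding AQ mmul_def subperm_def by (intro sum.cong) auto
    also have "\<dots> = (if p \<in> I then U (\<sigma> p) q else 0)"
    proof (cases "p \<in> I")
      case True
      then have "\<sigma> p \<in> {1..n}" using up by force
      then show ?thesis using True by (simp add: sum.delta')
    qed simp
    finally show ?thesis .
  qed
  have AN: "Af \<in> Nn n" using As_Nn by simp
  have Az: "\<And>p q. q \<le> p \<Longrightarrow> Af p q = 0" using AN unfolding Nn_def by auto
  have iI: "i \<in> I" using nz Aent by (auto split: if_splits)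
  have sij: "\<sigma> i \<le> j" using nz Aent iI Uu by (metis not_less)
  have sir: "\<sigma> i \<in> {1..n}" "i < \<sigma> i" using up iI by force+
  have one: "j = \<sigma> i \<longrightarrow> Af i j = 1" using Aent iI Ud sir by auto
  have ij1: "1 \<le> i" "j \<le> n" using ij by auto
  have sumag: "(\<Sum>a\<in>{1..n}. M p a * y a) = (\<Sum>a\<in>{1..n}. Af p a * y a)"
    if M: "M \<in> Nn n" and ab: "agree_before n Af M p q0" and y: "\<And>a. y a \<noteq> 0 \<Longrightarrow> a < q0"
      and p1: "1 \<le> p" and q0: "q0 \<le> n" for M p q0 and y :: "nat \<Rightarrow> 'a"
  proof (intro sum.cong refl)
    fix a assume a: "a \<in> {1..n}"
    show "M p a * y a = Af p a * y a"
    proof (cases "y a = 0")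
      case False
      then have "a < q0" using y by auto
      show ?thesis
      proof (cases "a \<le> p")
        case True then show ?thesis using M Az unfolding Nn_def by auto
      next
        case False
        then have "M p a = Af p a" using ab \<open>a < q0\<close> p1 q0 unfolding agree_before_def bel_less_def by auto
        then show ?thesis by simp
      qed
    qed simp
  qed
  have more: "j \<in> I \<and> (j \<in> \<sigma> ` I \<longrightarrow> the_inv_into I \<sigma> j < i)" if lt: "\<sigma> i < j"
  proof -
    have V1: "j \<in> I"
    proof (rule ccontr)
      assume jI: "j \<notin> I"
      define R where "R = rinv n U"
      define yy where "yy s a = - s * R a (\<sigma> i)" for s :: 'a and a
      have y1: "1 \<le> a \<and> a < j" if "yy s a \<noteq> 0" for s a
      proof -
        have "R a (\<sigma> i) \<noteq> 0" using that unfolding yy_def by auto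
        then have "a \<le> \<sigma> i" using rinv_upper[of "\<sigma> i" a n U] unfolding R_def by (cases "\<sigma> i < a") auto
        moreover have "a \<noteq> 0" 
        proof
          assume "a = 0"
          then have "R a (\<sigma> i) = 0" unfolding R_def by (subst rinv.simps) simp
          then show False using \<open>R a (\<sigma> i) \<noteq> 0\<close> by simp
        qed
        ultimately show ?thesis using lt by auto
      qed
      have jr: "j \<in> {1..n}" using ij by auto
      have AR: "(\<Sum>a\<in>{1..n}. Af p a * yy s a) = (if p \<in> I then - s * idm n (\<sigma> p) (\<sigma> i) else 0)" for p s
      proof (cases "p \<in> I")
        case True
        have "(\<Sum>a\<in>{1..n}. Af p a * yy s a) = - s * (\<Sum>a\<in>{1..n}. U (\<sigma> p) a * R a (\<sigma> i))"
          unfolding yy_def Aent using True by (simp add: sum_distrib_left algebra_simps)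
        also have "\<dots> = - s * mmul n U R (\<sigma> p) (\<sigma> i)" unfolding mmul_def ..
        also have "\<dots> = - s * idm n (\<sigma> p) (\<sigma> i)" unfolding R_def rinv_right[OF UB] ..
        finally show ?thesis using True by simp
      qed (simp add: Aent)
      have "Af i j = 0"
      proof (rule kill[where gg = "\<lambda>s. idm n + colX j (yy s)"])
        show "1 \<le> i" "i < j" "j \<le> n" using ij1 sir lt by auto
        show "idm n + colX j (yy s) \<in> Bn n" for s
          by (rule col_conj(1)[OF jr _ AN]) (rule y1)
      next
        fix s M p q assume M: "M \<in> Nn n" and v: "1 \<le> p" "p < q" "q \<le> n" and bl: "bel_less (p, q) (i, j)"
          and ab: "agree_before n Af M p q"
        have Mz: "\<And>a b. b \<le> a \<Longrightarrow> M a b = 0" using M unfolding Nn_def by auto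
        have t1: "yy s p * M j q = 0"
        proof (cases "yy s p = 0")
          case False
          then have "p < j" using y1 by auto
          show ?thesis
          proof (cases "q \<le> j")
            case True then show ?thesis using Mz by simp
          next
            case False
            then have "M j q = Af j q" using ab \<open>p < j\<close> v ij1 unfolding agree_before_def bel_less_def by auto
            then show ?thesis using Aent jI by simp
          qed
        qed simp
        have t2: "(if q = j then (\<Sum>a\<in>{1..n}. M p a * yy s a) else 0) = 0"
        proof (cases "q = j")
          case True
          then have "p > i" using bl unfolding bel_less_def by auto
          have "(\<Sum>a\<in>{1..n}. M p a * yy s a) = (\<Sum>a\<in>{1..n}. Af p a * yy s a)"
            using sumag[OF M, of p q "yy s"] ab True y1 v by blast
          also have "\<dots> = 0" unfolding AR using \<open>p > i\<close> inj iI
            by (auto simp: idm_def dest: inj_onD)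
          finally show ?thesis by simp
        qed simp
        show "conj n (idm n + colX j (yy s)) M p q = M p q"
          using col_conj(2)[OF jr, of "yy s" M p q] y1 M t1 t2 by simp
      next
        fix s M assume M: "M \<in> Nn n" and ab: "agree_before n Af M i j"
        have Mz: "\<And>a b. b \<le> a \<Longrightarrow> M a b = 0" using M unfolding Nn_def by auto
        have "(\<Sum>a\<in>{1..n}. M i a * yy s a) = (\<Sum>a\<in>{1..n}. Af i a * yy s a)"
          using sumag[OF M ab, of "yy s"] y1 ij1 by blast
        also have "\<dots> = - s" unfolding AR using iI sir by (simp add: idm_def)
        finally show "conj n (idm n + colX j (yy s)) M i j = M i j + s"
          using col_conj(2)[OF jr, of "yy s" M i j] y1 M Mz[of j j] by simp
      qed
      then show False using nz by simp
    qed
    have V2: "the_inv_into I \<sigma> j < i" if js: "j \<in> \<sigma> ` I"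
    proof (rule ccontr)
      assume "\<not> the_inv_into I \<sigma> j < i"
      define b where "b = the_inv_into I \<sigma> j"
      have bI: "b \<in> I" and sb: "\<sigma> b = j" using js inj unfolding b_def
        by (auto simp: the_inv_into_f_f the_inv_into_into)
      have "b \<noteq> i" using sb lt by auto
      then have ib: "i < b" using \<open>\<not> the_inv_into I \<sigma> j < i\<close> b_def by auto
      have bj: "b < j" using up bI sb by auto
      have br: "b \<in> {1..n}" using bI IS by auto
      define yy where "yy s a = (if a = i then s else 0)" for s :: 'a and a :: nat
      have y1: "1 \<le> a \<and> a < b" if "yy s a \<noteq> 0" for s a using that ib ij1 unfolding yy_def by (auto split: if_splits)
      have ysum: "(\<Sum>a\<in>{1..n}. M p a * yy s a) = M p i * s" for M p s
        unfolding yy_def using ij by (simp add: if_distrib[of "\<lambda>x. _ * x"] sum.delta' cong: if_cong)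
      have "Af i j = 0"
      proof (rule kill[where gg = "\<lambda>s. idm n + colX b (yy s)"])
        show "1 \<le> i" "i < j" "j \<le> n" using ij1 sir lt by auto
        show "idm n + colX b (yy s) \<in> Bn n" for s
          by (rule col_conj(1)[OF br _ AN]) (rule y1)
      next
        fix s M p q assume M: "M \<in> Nn n" and v: "1 \<le> p" "p < q" "q \<le> n" and bl: "bel_less (p, q) (i, j)"
          and ab: "agree_before n Af M p q"
        have Mz: "\<And>a b. b \<le> a \<Longrightarrow> M a b = 0" using M unfolding Nn_def by auto
        have t1: "yy s p * M b q = 0"
        proof (cases "p = i")
          case True
          then have "q < j" using bl unfolding bel_less_def by auto
          show ?thesis
          proof (cases "q \<le> b")
            case True then show ?thesis using Mz by simp
          next
            case False
            then have "M b q = Af b q" using ab \<open>p = i\<close> ib v ij1 unfolding agree_before_def bel_less_def by auto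
            then show ?thesis using Aent bI sb Uu \<open>q < j\<close> by simp
          qed
        qed (simp add: yy_def)
        have "i \<le> p" using bl unfolding bel_less_def by auto
        then have t2: "M p i * s = 0" using Mz by simp
        show "conj n (idm n + colX b (yy s)) M p q = M p q"
        proof -
          have "(\<Sum>a\<in>{1..n}. M p a * yy s a) = 0" using ysum[of M p s] t2 by simp
          then show ?thesis using col_conj(2)[OF br, of "yy s" M p q] y1 M t1 by simp
        qed
      next
        fix s M assume M: "M \<in> Nn n" and ab: "agree_before n Af M i j"
        have Mz: "\<And>a b. b \<le> a \<Longrightarrow> M a b = 0" using M unfolding Nn_def by auto
        have "M b j = Af b j" using ab ib bj ij1 ij unfolding agree_before_def bel_less_def by auto
        also have "\<dots> = 1" using Aent bI sb Ud ij by auto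
        finally have "M b j = 1" .
        then show "conj n (idm n + colX b (yy s)) M i j = M i j + s"
          using col_conj(2)[OF br, of "yy s" M i j] y1 M ysum[of M i s] Mz[of i i] bj by (simp add: yy_def)
      qed
      then show False using nz by simp
    qed
    show ?thesis using V1 V2 by auto
  qed
  show ?thesis using iI sij one more by auto
qed

end

theorem theorem4p8:
  fixes n :: nat and I :: "nat set" and \<sigma> :: "nat \<Rightarrow> nat" and A :: "'a::field mat"
  assumes "I \<subseteq> {1..n}" and "inj_on \<sigma> I" and "\<forall>i\<in>I. i < \<sigma> i \<and> \<sigma> i \<le> n"
    and "A \<in> QUn n (subperm I \<sigma>)" and "is_bel_cf n A"
  defines "Sh \<equiv> {1..n} - I" and "St \<equiv> {1..n} - \<sigma> ` I"
  shows "(\<forall>i\<in>{1..n}. \<forall>j\<in>{1..n}. A i j \<noteq> 0 \<longrightarrow>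
            i \<in> I \<and>
            ((j = \<sigma> i \<and> A i j = 1)
             \<or> (j \<in> St - Sh \<and> \<sigma> i < j)
             \<or> (j \<notin> St \<union> Sh \<and> the_inv_into I \<sigma> j < i \<and> i < \<sigma> i \<and> \<sigma> i < j)))
       \<and> (\<forall>i\<in>I. \<forall>j\<in>{1..n}. \<forall>j'\<in>{1..n}.
            same_chain I \<sigma> j j' \<and> A i j \<noteq> 0 \<and> A i j' \<noteq> 0 \<longrightarrow> j = j')"
proof -
  obtain U where U: "U \<in> Un_n n" and AQ: "A = mmul n (subperm I \<sigma>) U"
    using assms(4) unfolding QUn_def by auto
  obtain A0 As Gs where A0: "A0 \<in> Nn n" and run: "bel_run n A0 As Gs"
    and fin: "As (length (bel_positions n)) = A"
    using assms(5) unfolding is_bel_cf_def bel_cf_of_def by auto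
  interpret brun n A0 As Gs using run A0 by unfold_locales
  have P1: "i \<in> I \<and> \<sigma> i \<le> j \<and> (j = \<sigma> i \<longrightarrow> A i j = 1)
     \<and> (\<sigma> i < j \<longrightarrow> j \<in> I \<and> (j \<in> \<sigma> ` I \<longrightarrow> the_inv_into I \<sigma> j < i))"
    if "i \<in> {1..n}" "j \<in> {1..n}" "A i j \<noteq> 0" for i j
    using part1[OF assms(1-3) U, of i j] AQ fin that by simp
  have part1': "i \<in> I \<and>
            ((j = \<sigma> i \<and> A i j = 1)
             \<or> (j \<in> St - Sh \<and> \<sigma> i < j)
             \<or> (j \<notin> St \<union> Sh \<and> the_inv_into I \<sigma> j < i \<and> i < \<sigma> i \<and> \<sigma> i < j))"
    if h: "i \<in> {1..n}" "j \<in> {1..n}" "A i j \<noteq> 0" for i j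
  proof -
    have P: "i \<in> I" "\<sigma> i \<le> j" "j = \<sigma> i \<longrightarrow> A i j = 1"
      "\<sigma> i < j \<longrightarrow> j \<in> I \<and> (j \<in> \<sigma> ` I \<longrightarrow> the_inv_into I \<sigma> j < i)"
      using P1[OF h] by auto
    have "i < \<sigma> i" using P(1) assms(3) by auto
    show ?thesis
    proof (cases "j = \<sigma> i")
      case True then show ?thesis using P by auto
    next
      case False
      then have "\<sigma> i < j" using P(2) by auto
      then have jI: "j \<in> I" using P(4) by blast
      show ?thesis
      proof (cases "j \<in> \<sigma> ` I")
        case True
        then have "the_inv_into I \<sigma> j < i" using P(4) \<open>\<sigma> i < j\<close> by blast
        moreover have "j \<notin> St \<union> Sh" using True jI unfolding Sh_def St_def by blast
        ultimately show ?thesis using P(1) \<open>i < \<sigma> i\<close> \<open>\<sigma> i < j\<close> by blast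
      next
        case False
        then have "j \<in> St - Sh" using jI h(2) unfolding Sh_def St_def by blast
        then show ?thesis using P(1) \<open>\<sigma> i < j\<close> by blast
      qed
    qed
  qed
  have H: "x = \<sigma> i \<or> (x \<notin> \<sigma> ` I \<and> \<sigma> i < x) \<or> (x \<in> \<sigma> ` I \<and> the_inv_into I \<sigma> x < i \<and> \<sigma> i < x)"
    if "i \<in> {1..n}" "x \<in> {1..n}" "A i x \<noteq> 0" for i x
  proof -
    from part1'[OF that] consider "x = \<sigma> i" | "x \<in> St - Sh \<and> \<sigma> i < x"
      | "x \<notin> St \<union> Sh \<and> the_inv_into I \<sigma> x < i \<and> \<sigma> i < x" by blast
    then show ?thesis
    proof cases
      case 2 then have "x \<notin> \<sigma> ` I" unfolding St_def by blast
      then show ?thesis using 2 by blast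
    next
      case 3 then have "x \<in> \<sigma> ` I" using that(2) unfolding St_def by blast
      then show ?thesis using 3 by blast
    qed blast
  qed
  have part2: "j = j'" if i: "i \<in> I" and j: "j \<in> {1..n}" "j' \<in> {1..n}" and sc: "same_chain I \<sigma> j j'"
    and nz: "A i j \<noteq> 0" "A i j' \<noteq> 0" for i j j'
  proof (rule ccontr)
    assume ne: "j \<noteq> j'"
    have ir: "i \<in> {1..n}" using i assms(1) by auto
    have up: "\<forall>i\<in>I. i < \<sigma> i" using assms(3) by auto
    from same_chain_cpath[OF sc assms(2)] show False
    proof
      assume cp: "cpath I \<sigma> j j'"
      then have "j < j'" using cpath_mono[OF cp up] ne by auto
      then show False using chain_unique[OF assms(2) up i cp] H ir j nz by blast
    next
      assume cp: "cpath I \<sigma> j' j"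
      then have "j' < j" using cpath_mono[OF cp up] ne by auto
      then show False using chain_unique[OF assms(2) up i cp] H ir j nz by blast
    qed
  qed
  show ?thesis using part1' part2 by blast
qed


end
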